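(* Let $S$ be a semigroup, let $T$ be a subsemigroup of $S$ generated by a finite set $A$, and let $s\in S$. Suppose that $|\langle T,s\rangle\setminus T|=n$ is finite. Then there exists $N\in\mathbb{N}$ such that for all $b_1,\ldots,b_n\in A\cup\{s\}$, if the elements $s, sb_1, sb_1b_2,\ldots, sb_1\cdots b_n$ are pairwise distinct, then there exist $0\le i\le n$, $1\le j\le N$ and $a_1,\ldots,a_j\in A$ such that $sb_1\cdots b_i=a_1\cdots a_j$ (where for $i=0$ the left-hand side is $s$).
   Context: $\langle T,s\rangle$ denotes the subsemigroup of $S$ generated by $T\cup\{s\}$. *)

theory Defs
  imports Main
begin

inductive_set gen_sg :: "'a::semigroup_mult set \<Rightarrow> 'a set" for X :: "'a set" where
  base: "x \<in> X \<Longrightarrow> x \<in> gen_sg X"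
| mult: "x \<in> gen_sg X \<Longrightarrow> y \<in> gen_sg X \<Longrightarrow> x * y \<in> gen_sg X"

text \<open>Product x1 * x2 * ... * xk of a nonempty list (left-associated).\<close>
definition lprod :: "'a::semigroup_mult list \<Rightarrow> 'a" where
  "lprod xs = foldl (*) (hd xs) (tl xs)"

end

theory Submission
  imports Defs
begin

lemma foldl_assoc_sg: "foldl (*) ((x::'a::semigroup_mult) * y) ys = x * foldl (*) y ys"
  by (induction ys arbitrary: y) (auto simp: mult.assoc)

lemma lprod_append:
  assumes "xs \<noteq> []" "ys \<noteq> []"
  shows "lprod (xs @ ys) = lprod xs * lprod (ys::'a::semigroup_mult list)"
proof -
  obtain x xs' where x: "xs = x # xs'" using assms by (cases xs) auto
  obtain y ys' where y: "ys = y # ys'" using assms by (cases ys) auto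
  show ?thesis unfolding lprod_def x y by (simp add: foldl_assoc_sg)
qed

lemma gen_sg_lprod:
  assumes "x \<in> gen_sg A"
  shows "\<exists>as. as \<noteq> [] \<and> set as \<subseteq> A \<and> lprod as = x"
  using assms
proof (induction rule: gen_sg.induct)
  case (base x)
  then show ?case by (intro exI[of _ "[x]"]) (auto simp: lprod_def)
next
  case (mult x y)
  then obtain xs ys where "xs \<noteq> []" "set xs \<subseteq> A" "lprod xs = x"
     "ys \<noteq> []" "set ys \<subseteq> A" "lprod ys = y" by blast
  then show ?case by (intro exI[of _ "xs @ ys"]) (auto simp: lprod_append)
qed

lemma foldl_in_gen:
  "x \<in> gen_sg X \<Longrightarrow> set bs \<subseteq> gen_sg X \<Longrightarrow> foldl (*) x bs \<in> gen_sg X"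
  by (induction bs arbitrary: x) (auto intro: gen_sg.mult)

lemma key:
  fixes A :: "'a::semigroup_mult set" and s :: 'a and n :: nat
  assumes "finite (gen_sg (insert s (gen_sg A)) - gen_sg A)"
    and "card (gen_sg (insert s (gen_sg A)) - gen_sg A) = n"
    and "length bs = n" "set bs \<subseteq> insert s A"
    and d: "distinct (map (\<lambda>i. foldl (*) s (take i bs)) [0..<n+1])"
  shows "\<exists>i\<le>n. foldl (*) s (take i bs) \<in> gen_sg A"
proof (rule ccontr)
  assume nc: "\<not> ?thesis"
  let ?G = "gen_sg (insert s (gen_sg A))"
  let ?F = "(\<lambda>i. foldl (*) s (take i bs))"
  have sG: "s \<in> ?G" by (auto intro: gen_sg.base)
  have AG: "A \<subseteq> ?G" by (auto intro: gen_sg.base)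
  have bsG: "set bs \<subseteq> ?G" using assms(4) sG AG by auto
  have sub: "?F ` {0..<n+1} \<subseteq> ?G - gen_sg A"
  proof
    fix y assume "y \<in> ?F ` {0..<n+1}"
    then obtain i where i: "i \<le> n" "y = ?F i" by (auto simp: less_Suc_eq_le)
    have "set (take i bs) \<subseteq> ?G" using set_take_subset[of i bs] bsG by (rule subset_trans)
    hence "y \<in> ?G" using i foldl_in_gen[OF sG] by blast
    moreover have "y \<notin> gen_sg A" using nc i by auto
    ultimately show "y \<in> ?G - gen_sg A" by blast
  qed
  have "card (?F ` {0..<n+1}) = n + 1"
  proof -
    have c: "card (set (map ?F [0..<n+1])) = length (map ?F [0..<n+1])"
      by (rule distinct_card[OF d])
    have "set (map ?F [0..<n+1]) = ?F ` {0..<n+1}" by (simp only: set_map set_upt)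
    moreover have "length (map ?F [0..<n+1]) = n + 1" by (simp only: length_map length_upt)
    ultimately show ?thesis using c by simp
  qed
  moreover have "card (?F ` {0..<n+1}) \<le> n"
    using card_mono[OF assms(1) sub] assms(2) by simp
  ultimately show False by simp
qed

theorem mainTheorem4:
  fixes A :: "'a::semigroup_mult set" and s :: 'a and n :: nat
  assumes "finite A"
    and "finite (gen_sg (insert s (gen_sg A)) - gen_sg A)"
    and "card (gen_sg (insert s (gen_sg A)) - gen_sg A) = n"
  shows "\<exists>N::nat. \<forall>bs :: 'a list. length bs = n \<and> set bs \<subseteq> insert s A \<and>
            distinct (map (\<lambda>i. foldl (*) s (take i bs)) [0..<n+1]) \<longrightarrow>
            (\<exists>i\<le>n. \<exists>as :: 'a list. 1 \<le> length as \<and> length as \<le> N \<and> set as \<subseteq> A \<and>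
               foldl (*) s (take i bs) = lprod as)"
proof -
  define B where "B = {bs. set bs \<subseteq> insert s A \<and> length bs = n \<and>
            distinct (map (\<lambda>i. foldl (*) s (take i bs)) [0..<n+1])}"
  have fB: "finite B"
    by (rule finite_subset[OF _ finite_lists_length_eq[of "insert s A" n]])
       (use assms(1) in \<open>auto simp: B_def\<close>)
  have "\<forall>bs\<in>B. \<exists>k. \<exists>i\<le>n. \<exists>as :: 'a list. 1 \<le> length as \<and> length as = k \<and> set as \<subseteq> A \<and>
               foldl (*) s (take i bs) = lprod as"
  proof
    fix bs assume "bs \<in> B"
    then obtain i where i: "i \<le> n" "foldl (*) s (take i bs) \<in> gen_sg A"
      using key[OF assms(2,3)] unfolding B_def by blast
    then obtain as where "as \<noteq> []" "set as \<subseteq> A" "lprod as = foldl (*) s (take i bs)"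
      using gen_sg_lprod by blast
    then show "\<exists>k. \<exists>i\<le>n. \<exists>as :: 'a list. 1 \<le> length as \<and> length as = k \<and> set as \<subseteq> A \<and>
               foldl (*) s (take i bs) = lprod as"
      using i by (intro exI[of _ "length as"] exI[of _ i]) (auto simp: Suc_le_eq)
  qed
  from bchoice[OF this] obtain g where g: "\<forall>bs\<in>B. \<exists>i\<le>n. \<exists>as :: 'a list. 1 \<le> length as \<and> length as = g bs
       \<and> set as \<subseteq> A \<and> foldl (*) s (take i bs) = lprod as"
    by blast
  show ?thesis
  proof (rule exI[of _ "Max (g ` B)"], intro allI impI)
    fix bs assume "length bs = n \<and> set bs \<subseteq> insert s A \<and>
            distinct (map (\<lambda>i. foldl (*) s (take i bs)) [0..<n+1])"
    hence bB: "bs \<in> B" unfolding B_def by auto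
    have le: "g bs \<le> Max (g ` B)" using fB bB by simp
    from g bB obtain i as where h: "i \<le> n" "1 \<le> length as" "length as = g bs" "set as \<subseteq> A"
      "foldl (*) s (take i bs) = lprod as" by blast
    have l2: "length as \<le> Max (g ` B)" using le \<open>length as = g bs\<close> by simp
    show "\<exists>i\<le>n. \<exists>as :: 'a list. 1 \<le> length as \<and> length as \<le> Max (g ` B) \<and> set as \<subseteq> A \<and>
               foldl (*) s (take i bs) = lprod as"
      using h l2 by (intro exI[of _ i] conjI exI[of _ as]) simp_all
  qed
qed

end
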